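(* Consider the event-triggered closed-loop system described in the context, with the triggering condition $\Phi(t)=\varphi(\xi(t),\varepsilon(t))-k_1\phi_1(t)-k_2\phi_2(t)=0$ and with the initial values of $\phi_1,\phi_2$ satisfying: $\sum_k r_k\le\theta_2$, $\sum_k\hat r_k\le\theta_3$ for some finite $\theta_2,\theta_3>0$, $s_k\ge\bar\delta$ and $\hat s_k=\delta_k(\hat t_k)$. Then $\phi_1(t)\ge 0$ and $\phi_2(t)\ge 0$ for all $t\ge t_0$. More precisely, $\phi_2(t)\ge\bar\delta$ for $t\in[t_k,\hat t_k)$ and $\phi_2(t)=\delta_k(t)$ for $t\in[\hat t_k,t_{k+1})$.
   Context: Plant: $\dot\xi=f(\xi,d)+g(\xi)u$, $z=h(\xi,d)$, with state $\xi\in\mathbb{R}^n$, input $u\in\mathbb{R}^m$, disturbance $d(t)\in\mathbb{R}^q$, output $z\in\mathbb{R}^s$; $f,g,h$ locally Lipschitz, $f(0,0)=0$, $h(0,0)=0$. A locally Lipschitz state feedback $\gamma:\mathbb{R}^n\to\mathbb{R}^m$ is implemented in an event-triggered way: there is an increasing sequence of sampling times $t_0<t_1<\dots$ (indexed by $k\in\mathbb{K}=\{0,1,\dots,K\}$, with $t_{K+1}=\infty$ if $K$ is finite), $u(t)=\gamma(\xi(t_k))$ for $t\in[t_k,t_{k+1})$, and the sampling error is $\varepsilon(t)=\xi(t_k)-\xi(t)$ for $t\in[t_k,t_{k+1})$. Hence $\dot\xi=f(\xi,d)+g(\xi)\gamma(\xi+\varepsilon)$, and $t_{k+1}=\inf\{t>t_k:\Phi(t^-)=0\}$.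 Here $k_1,k_2>0$, $p\in[1,\infty)$, $\sigma<1$, $\lambda>0$, $c_1,c_2>0$, $V_c$ is a differentiable function, and $\varphi(r,s)=-c_1\sigma\|r\|^p+c_2\|s\|^p+\lambda\nabla V_c(r)\cdot g(r)(\gamma(r+s)-\gamma(r))$. The dynamic variables satisfy, on each $[t_k,t_{k+1})$: $\dot\phi_1=-\alpha_1(\phi_1)+k_2\phi_2-\varphi(\xi,\varepsilon)$ and $\dot\phi_2=-\alpha_2(\phi_2)+\bar\varphi(t)$, where $\alpha_1,\alpha_2$ are class-$\mathcal{K}_\infty$ functions, $\bar\varphi(t)=\alpha_2(\bar\delta)$ for $t\in[t_k,\hat t_k)$ and $\bar\varphi(t)=\dot\delta_k(t)+\alpha_2(\delta_k(t))$ for $t\in[\hat t_k,t_{k+1})$. Here $\bar\delta>0$ is a constant, $\hat t_k=t_k+\hat\tau$ for a constant $\hat\tau>0$, and each $\delta_k$ is a positive, bounded, piecewise differentiable function on $[\hat t_k,t_{k+1})$ with $\sum_k\int_{\hat t_k}^{t_{k+1}}\delta_k(\tau)\,d\tau\le\theta_1$ for some $\theta_1>0$. The variables are (re)initialized as $\phi_1(t_k)=r_k$, $\phi_1(\hat t_k)=\hat r_k$, $\phi_2(t_k)=s_k$, $\phi_2(\hat t_k)=\hat s_k$ with $r_k,\hat r_k,s_k,\hat s_k\ge 0$. *)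

theory Defs
  imports "HOL-Analysis.Analysis" "HOL-Library.Extended_Nat"
begin

definition classKinf :: "(real \<Rightarrow> real) \<Rightarrow> bool" where
  "classKinf \<alpha> \<longleftrightarrow> continuous_on {0..} \<alpha> \<and> \<alpha> 0 = 0 \<and>
     strict_mono_on {0..} \<alpha> \<and> filterlim \<alpha> at_top at_top"

definition loc_lipschitz :: "('a::metric_space \<Rightarrow> 'b::metric_space) \<Rightarrow> bool" where
  "loc_lipschitz F \<longleftrightarrow>
     (\<forall>x. \<exists>r>0. \<exists>L. \<forall>y\<in>ball x r. \<forall>z\<in>ball x r. dist (F y) (F z) \<le> L * dist y z)"

text \<open>Index set K = {0,...,K} (K = \<infinity> means the set of all naturals).\<close>
definition Kset :: "enat \<Rightarrow> nat set" where
  "Kset K = {k. enat k \<le> K}"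

definition nextT :: "enat \<Rightarrow> (nat \<Rightarrow> real) \<Rightarrow> nat \<Rightarrow> ereal" where
  "nextT K t k = (if enat (Suc k) \<le> K then ereal (t (Suc k)) else \<infinity>)"

definition Ival :: "enat \<Rightarrow> (nat \<Rightarrow> real) \<Rightarrow> nat \<Rightarrow> real set" where
  "Ival K t k = {\<tau>. t k \<le> \<tau> \<and> ereal \<tau> < nextT K t k}"

text \<open>First piece [t_k, hat t_k) (intersected with [t_k, t_(k+1))), hat t_k = t_k + hat tau.\<close>
definition Ival1 :: "enat \<Rightarrow> (nat \<Rightarrow> real) \<Rightarrow> real \<Rightarrow> nat \<Rightarrow> real set" where
  "Ival1 K t tauh k = {\<tau>. t k \<le> \<tau> \<and> \<tau> < t k + tauh \<and> ereal \<tau> < nextT K t k}"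

definition Ival2 :: "enat \<Rightarrow> (nat \<Rightarrow> real) \<Rightarrow> real \<Rightarrow> nat \<Rightarrow> real set" where
  "Ival2 K t tauh k = {\<tau>. t k + tauh \<le> \<tau> \<and> ereal \<tau> < nextT K t k}"

definition varphi ::
  "real \<Rightarrow> real \<Rightarrow> real \<Rightarrow> real \<Rightarrow> real \<Rightarrow> (real^'n \<Rightarrow> real^'n) \<Rightarrow>
   (real^'n \<Rightarrow> real^'m^'n) \<Rightarrow> (real^'n \<Rightarrow> real^'m) \<Rightarrow> real^'n \<Rightarrow> real^'n \<Rightarrow> real" where
  "varphi c1 c2 \<sigma> p lam gradVc g \<gamma> r s =
     - c1 * \<sigma> * norm r powr p + c2 * norm s powr p
     + lam * (gradVc r \<bullet> (g r *v (\<gamma> (r + s) - \<gamma> r)))"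

end

theory Submission
  imports Defs
begin



lemma last_cross:
  fixes f :: "real \<Rightarrow> real"
  assumes ab: "a \<le> b" and cont: "continuous_on {a..b} f" and fa: "f a \<ge> c" and fb: "f b < c"
  shows "\<exists>s. a \<le> s \<and> s < b \<and> f s = c \<and> (\<forall>x. s < x \<and> x \<le> b \<longrightarrow> f x < c)"
proof -
  define A where "A = {a..b} \<inter> f -` {c..}"
  have cl: "closed A" unfolding A_def by (rule continuous_closed_preimage[OF cont]) auto
  have aA: "a \<in> A" using ab fa by (auto simp: A_def)
  have bdd: "bdd_above A" unfolding A_def by (auto intro: bdd_aboveI[of _ b])
  have sA: "Sup A \<in> A" using closed_contains_Sup[OF _ bdd cl] aA by auto
  have up: "x \<le> Sup A" if "x \<in> A" for x using that bdd by (rule cSup_upper)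
  have sb: "Sup A < b" using sA fb by (auto simp: A_def order.order_iff_strict)
  have after: "\<forall>x. Sup A < x \<and> x \<le> b \<longrightarrow> f x < c"
  proof (intro allI impI)
    fix x assume x: "Sup A < x \<and> x \<le> b"
    have "a \<le> x" using sA x by (auto simp: A_def)
    show "f x < c"
    proof (rule ccontr)
      assume "\<not> f x < c"
      then have "x \<in> A" using x \<open>a \<le> x\<close> by (auto simp: A_def)
      then show False using up[of x] x by simp
    qed
  qed
  have "\<exists>x. Sup A \<le> x \<and> x \<le> b \<and> f x = c"
    by (rule IVT2') (use sA fb sb in \<open>auto simp: A_def intro: continuous_on_subset[OF cont]\<close>)
  then obtain x where x: "Sup A \<le> x" "x \<le> b" "f x = c" by blast
  then have "x \<in> A" using sA by (auto simp: A_def)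
  then have "x = Sup A" using up x by force
  then show ?thesis using x sA sb after by (auto simp: A_def)
qed

lemma mono_fin:
  fixes f f' :: "real \<Rightarrow> real"
  assumes ab: "a \<le> b" and cont: "continuous_on {a..b} f" and S: "finite S"
    and der: "\<And>x. x \<in> {a<..<b} - S \<Longrightarrow> (f has_real_derivative f' x) (at x)"
    and nn: "\<And>x. x \<in> {a<..<b} - S \<Longrightarrow> f' x \<ge> 0"
  shows "f a \<le> f b"
proof -
  define g where "g x = (if x \<in> {a<..<b} - S then f' x else 0)" for x
  have "(g has_integral (f b - f a)) {a..b}"
  proof (rule fundamental_theorem_of_calculus_interior_strong[OF S ab _ cont])
    fix x assume "x \<in> {a<..<b} - S"
    then show "(f has_vector_derivative g x) (at x)"
      using der[of x] by (simp add: g_def has_real_derivative_iff_has_vector_derivative)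
  qed
  moreover have "\<forall>x\<in>{a..b}. 0 \<le> g x" using nn by (simp add: g_def)
  ultimately have "0 \<le> f b - f a" by (metis has_integral_nonneg)
  then show ?thesis by simp
qed

lemma nonneg_keep:
  fixes f f' :: "real \<Rightarrow> real"
  assumes aI: "a \<in> I" and fa: "f a \<ge> 0"
    and conv: "\<And>x y z. x \<in> I \<Longrightarrow> y \<in> I \<Longrightarrow> x \<le> z \<Longrightarrow> z \<le> y \<Longrightarrow> z \<in> I"
    and der: "\<And>x. x \<in> I \<Longrightarrow> (f has_real_derivative f' x) (at x within I)"
    and pos: "\<And>x. x \<in> I \<Longrightarrow> f x = 0 \<Longrightarrow> f' x > 0"
    and bI: "b \<in> I" and ab: "a \<le> b"
  shows "f b \<ge> 0"
proof (rule ccontr)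
  assume "\<not> f b \<ge> 0"
  then have fb: "f b < 0" by simp
  have sub: "{a..b} \<subseteq> I"
  proof
    fix z assume "z \<in> {a..b}"
    then show "z \<in> I" using conv[OF aI bI, of z] by simp
  qed
  have "continuous_on I f"
    using der by (metis DERIV_continuous continuous_on_eq_continuous_within)
  then have cont: "continuous_on {a..b} f" using continuous_on_subset sub by blast
  obtain s where s: "a \<le> s" "s < b" "f s = 0" "\<And>x. s < x \<Longrightarrow> x \<le> b \<Longrightarrow> f x < 0"
    using last_cross[OF ab cont, of 0] fa fb by auto
  have sI: "s \<in> I" using sub s(1,2) by (meson atLeastAtMost_iff less_le_not_le subsetD)
  obtain d where d: "d > 0" "\<And>h. h > 0 \<Longrightarrow> s + h \<in> I \<Longrightarrow> h < d \<Longrightarrow> f s < f (s + h)"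
    using has_real_derivative_pos_inc_right[OF der[OF sI] pos[OF sI s(3)]] by auto
  define h where "h = min (d/2) (b - s)"
  have h: "h > 0" "h < d" "s + h \<le> b" using d s by (auto simp: h_def)
  have "s + h \<in> {a..b}" using h s(1) by simp
  then have "s + h \<in> I" using sub by blast
  then have "f s < f (s + h)" using d(2) h(1,2) by blast
  moreover have "f (s + h) < 0" using s(4)[of "s+h"] h by simp
  ultimately show False using s by simp
qed

lemma Ival1_conv: "x \<in> Ival1 K t th k \<Longrightarrow> y \<in> Ival1 K t th k \<Longrightarrow> x \<le> z \<Longrightarrow> z \<le> y \<Longrightarrow> z \<in> Ival1 K t th k"
  unfolding Ival1_def by (auto intro: order.strict_trans1[of "ereal z" "ereal y"])

lemma Ival2_conv: "x \<in> Ival2 K t th k \<Longrightarrow> y \<in> Ival2 K t th k \<Longrightarrow> x \<le> z \<Longrightarrow> z \<le> y \<Longrightarrow> z \<in> Ival2 K t th k"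
  unfolding Ival2_def by (auto intro: order.strict_trans1[of "ereal z" "ereal y"])

lemma Ival_split: "th > 0 \<Longrightarrow> Ival K t k = Ival1 K t th k \<union> Ival2 K t th k"
  unfolding Ival_def Ival1_def Ival2_def by auto

lemma deriv_open:
  fixes f :: "real \<Rightarrow> real"
  assumes "(f has_real_derivative D) (at x within I)" "{s<..<b} \<subseteq> I" "x \<in> {s<..<b}"
  shows "(f has_real_derivative D) (at x)"
proof -
  have "(f has_real_derivative D) (at x within {s<..<b})"
    using has_field_derivative_subset[OF assms(1,2)] .
  then show ?thesis using at_within_open[OF assms(3)] by simp
qed


theorem proposition1:
  fixes f :: "real^'n \<Rightarrow> real^'q \<Rightarrow> real^'n"
    and g :: "real^'n \<Rightarrow> real^'m^'n"
    and h :: "real^'n \<Rightarrow> real^'q \<Rightarrow> real^'s"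
    and \<gamma> :: "real^'n \<Rightarrow> real^'m"
    and Vc :: "real^'n \<Rightarrow> real" and gradVc :: "real^'n \<Rightarrow> real^'n"
    and d :: "real \<Rightarrow> real^'q"
    and \<xi> :: "real \<Rightarrow> real^'n"
    and t :: "nat \<Rightarrow> real" and K :: enat
    and k1 k2 p \<sigma> lam c1 c2 \<delta>bar \<tau>hat \<theta>1 \<theta>2 \<theta>3 :: real
    and \<alpha>1 \<alpha>2 :: "real \<Rightarrow> real"
    and \<delta> :: "nat \<Rightarrow> real \<Rightarrow> real"
    and r rh s sh :: "nat \<Rightarrow> real"
    and \<phi>1 \<phi>2 :: "real \<Rightarrow> real"
  assumes f_lip: "loc_lipschitz (\<lambda>(x, w). f x w)"
    and g_lip: "loc_lipschitz g"
    and h_lip: "loc_lipschitz (\<lambda>(x, w). h x w)"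
    and f0: "f 0 0 = 0" and h0: "h 0 0 = 0"
    and \<gamma>_lip: "loc_lipschitz \<gamma>"
    and Vc_grad: "\<And>x. (Vc has_derivative (\<lambda>v. gradVc x \<bullet> v)) (at x)"
    and params: "k1 > 0" "k2 > 0" "p \<ge> 1" "\<sigma> < 1" "lam > 0" "c1 > 0" "c2 > 0"
    and \<delta>bar_pos: "\<delta>bar > 0" and \<tau>hat_pos: "\<tau>hat > 0"
    and \<alpha>1_K: "classKinf \<alpha>1" and \<alpha>2_K: "classKinf \<alpha>2"
    and t_incr: "\<And>k. enat (Suc k) \<le> K \<Longrightarrow> t k < t (Suc k)"
    \<comment> \<open>closed-loop plant (Caratheodory solution) with u = gamma(xi(t_k)) on [t_k, t_(k+1))\<close>
    and plant: "\<And>k \<tau>. k \<in> Kset K \<Longrightarrow> t k \<le> \<tau> \<Longrightarrow> ereal \<tau> \<le> nextT K t k \<Longrightarrow>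
       ((\<lambda>v. f (\<xi> v) (d v) + g (\<xi> v) *v \<gamma> (\<xi> (t k))) has_integral (\<xi> \<tau> - \<xi> (t k))) {t k..\<tau>}"
    \<comment> \<open>the functions delta_k\<close>
    and \<delta>_pos: "\<And>k \<tau>. k \<in> Kset K \<Longrightarrow> \<tau> \<in> Ival2 K t \<tau>hat k \<Longrightarrow> \<delta> k \<tau> > 0"
    and \<delta>_bdd: "\<And>k. k \<in> Kset K \<Longrightarrow> bounded (\<delta> k ` Ival2 K t \<tau>hat k)"
    and \<delta>_pwd: "\<And>k. k \<in> Kset K \<Longrightarrow> \<delta> k piecewise_differentiable_on Ival2 K t \<tau>hat k"
    and \<delta>_int: "\<And>k. k \<in> Kset K \<Longrightarrow> \<delta> k integrable_on Ival2 K t \<tau>hat k"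
    and \<theta>1_pos: "\<theta>1 > 0"
    and \<delta>_sum: "\<And>N. (\<Sum>k\<in>Kset K \<inter> {..N}. integral (Ival2 K t \<tau>hat k) (\<delta> k)) \<le> \<theta>1"
    \<comment> \<open>dynamics of phi_1 on both pieces of [t_k, t_(k+1))\<close>
    and \<phi>1_ode1: "\<And>k \<tau>. k \<in> Kset K \<Longrightarrow> \<tau> \<in> Ival1 K t \<tau>hat k \<Longrightarrow>
       (\<phi>1 has_real_derivative
          (- \<alpha>1 (\<phi>1 \<tau>) + k2 * \<phi>2 \<tau> - varphi c1 c2 \<sigma> p lam gradVc g \<gamma> (\<xi> \<tau>) (\<xi> (t k) - \<xi> \<tau>)))
        (at \<tau> within Ival1 K t \<tau>hat k)"
    and \<phi>1_ode2: "\<And>k \<tau>. k \<in> Kset K \<Longrightarrow> \<tau> \<in> Ival2 K t \<tau>hat k \<Longrightarrow>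
       (\<phi>1 has_real_derivative
          (- \<alpha>1 (\<phi>1 \<tau>) + k2 * \<phi>2 \<tau> - varphi c1 c2 \<sigma> p lam gradVc g \<gamma> (\<xi> \<tau>) (\<xi> (t k) - \<xi> \<tau>)))
        (at \<tau> within Ival2 K t \<tau>hat k)"
    \<comment> \<open>dynamics of phi_2: barphi = alpha_2(delta bar) on [t_k, hat t_k)\<close>
    and \<phi>2_ode1: "\<And>k \<tau>. k \<in> Kset K \<Longrightarrow> \<tau> \<in> Ival1 K t \<tau>hat k \<Longrightarrow>
       (\<phi>2 has_real_derivative (- \<alpha>2 (\<phi>2 \<tau>) + \<alpha>2 \<delta>bar)) (at \<tau> within Ival1 K t \<tau>hat k)"
    \<comment> \<open>barphi = d/dt delta_k + alpha_2(delta_k) on [hat t_k, t_(k+1)), off finitely many points\<close>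
    and \<phi>2_cont2: "\<And>k. k \<in> Kset K \<Longrightarrow> continuous_on (Ival2 K t \<tau>hat k) \<phi>2"
    and \<phi>2_ode2: "\<And>k. k \<in> Kset K \<Longrightarrow> \<exists>S. finite S \<and> (\<forall>\<tau> \<in> Ival2 K t \<tau>hat k - S.
       (\<phi>2 has_real_derivative
          (- \<alpha>2 (\<phi>2 \<tau>) + vector_derivative (\<delta> k) (at \<tau> within Ival2 K t \<tau>hat k) + \<alpha>2 (\<delta> k \<tau>)))
        (at \<tau> within Ival2 K t \<tau>hat k))"
    \<comment> \<open>(re)initialization\<close>
    and init_t: "\<And>k. k \<in> Kset K \<Longrightarrow> \<phi>1 (t k) = r k \<and> \<phi>2 (t k) = s k"
    and init_th: "\<And>k. k \<in> Kset K \<Longrightarrow> t k + \<tau>hat \<in> Ival2 K t \<tau>hat k \<Longrightarrow>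
       \<phi>1 (t k + \<tau>hat) = rh k \<and> \<phi>2 (t k + \<tau>hat) = sh k"
    and init_nonneg: "\<And>k. k \<in> Kset K \<Longrightarrow> r k \<ge> 0 \<and> rh k \<ge> 0 \<and> s k \<ge> 0 \<and> sh k \<ge> 0"
    and \<theta>23_pos: "\<theta>2 > 0" "\<theta>3 > 0"
    and r_sum: "\<And>N. (\<Sum>k\<in>Kset K \<inter> {..N}. r k) \<le> \<theta>2"
    and rh_sum: "\<And>N. (\<Sum>k\<in>Kset K \<inter> {..N}. rh k) \<le> \<theta>3"
    and s_ge: "\<And>k. k \<in> Kset K \<Longrightarrow> s k \<ge> \<delta>bar"
    and sh_eq: "\<And>k. k \<in> Kset K \<Longrightarrow> sh k = \<delta> k (t k + \<tau>hat)"
    \<comment> \<open>triggering rule: Phi < 0 between consecutive sampling times\<close>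
    and trigger: "\<And>k \<tau>. k \<in> Kset K \<Longrightarrow> \<tau> \<in> Ival K t k \<Longrightarrow>
       varphi c1 c2 \<sigma> p lam gradVc g \<gamma> (\<xi> \<tau>) (\<xi> (t k) - \<xi> \<tau>) - k1 * \<phi>1 \<tau> - k2 * \<phi>2 \<tau> < 0"
  shows "(\<forall>k\<in>Kset K. \<forall>\<tau>\<in>Ival K t k. \<phi>1 \<tau> \<ge> 0 \<and> \<phi>2 \<tau> \<ge> 0)
       \<and> (\<forall>k\<in>Kset K. \<forall>\<tau>\<in>Ival1 K t \<tau>hat k. \<phi>2 \<tau> \<ge> \<delta>bar)
       \<and> (\<forall>k\<in>Kset K. \<forall>\<tau>\<in>Ival2 K t \<tau>hat k. \<phi>2 \<tau> = \<delta> k \<tau>)"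
  proof -
  have a10: "\<alpha>1 0 = 0" using \<alpha>1_K by (simp add: classKinf_def)
  have a2m: "strict_mono_on {0..} \<alpha>2" using \<alpha>2_K by (simp add: classKinf_def)
  have P2: "\<forall>k\<in>Kset K. \<forall>\<tau>\<in>Ival1 K t \<tau>hat k. \<phi>2 \<tau> \<ge> \<delta>bar"
  proof (intro ballI)
    fix k b assume k: "k \<in> Kset K" and bI: "b \<in> Ival1 K t \<tau>hat k"
    let ?I = "Ival1 K t \<tau>hat k"
    show "\<phi>2 b \<ge> \<delta>bar"
    proof (rule ccontr)
      assume "\<not> \<phi>2 b \<ge> \<delta>bar"
      then have fb: "\<phi>2 b < \<delta>bar" by simp
      have ab: "t k \<le> b" using bI by (simp add: Ival1_def)
      have aI: "t k \<in> ?I" using bI \<tau>hat_pos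
        unfolding Ival1_def by (auto intro: order.strict_trans1[of "ereal (t k)" "ereal b"])
      have sub: "{t k..b} \<subseteq> ?I"
      proof
        fix z assume "z \<in> {t k..b}"
        then show "z \<in> ?I" using Ival1_conv[OF aI bI, of z] by simp
      qed
      have contI: "continuous_on ?I \<phi>2"
        using \<phi>2_ode1[OF k] by (metis DERIV_continuous continuous_on_eq_continuous_within)
      then have cont: "continuous_on {t k..b} \<phi>2" using continuous_on_subset sub by blast
      have fa: "\<phi>2 (t k) \<ge> \<delta>bar" using init_t[OF k] s_ge[OF k] by simp
      obtain s where s: "t k \<le> s" "s < b" "\<phi>2 s = \<delta>bar" "\<And>x. s < x \<Longrightarrow> x \<le> b \<Longrightarrow> \<phi>2 x < \<delta>bar"
        using last_cross[OF ab cont fa fb] by auto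
      have "continuous (at s within {t k..b}) \<phi>2" using cont s(1,2)
        by (simp add: continuous_on_eq_continuous_within)
      then obtain d where d: "d > 0" "\<And>x. x \<in> {t k..b} \<Longrightarrow> dist x s < d \<Longrightarrow> dist (\<phi>2 x) (\<phi>2 s) < \<delta>bar"
        using continuous_within_eps_delta \<delta>bar_pos by metis
      define b' where "b' = min b (s + d/2)"
      have b': "s < b'" "b' \<le> b" "b' \<le> s + d/2" using s d by (auto simp: b'_def)
      have pos: "\<phi>2 x > 0" if "s \<le> x" "x \<le> b'" for x
      proof -
        have "x \<in> {t k..b}" using that s b' by simp
        moreover have "dist x s < d" using that b' d by (simp add: dist_real_def)
        ultimately have "dist (\<phi>2 x) (\<phi>2 s) < \<delta>bar" by (rule d(2))
        then show ?thesis using s(3) by (simp add: dist_real_def)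
      qed
      have "\<phi>2 s \<le> \<phi>2 b'"
      proof (rule mono_fin[where a=s and b=b' and f=\<phi>2 and S="{}" and f'="\<lambda>x. - \<alpha>2 (\<phi>2 x) + \<alpha>2 \<delta>bar"])
        show "s \<le> b'" using b' by simp
        show "continuous_on {s..b'} \<phi>2" using cont s(1) b' by (auto intro: continuous_on_subset)
        show "finite {}" by simp
        have subo: "{s<..<b'} \<subseteq> ?I" using sub s(1) b' by auto
        fix x assume x: "x \<in> {s<..<b'} - {}"
        then have xI: "x \<in> ?I" using subo by auto
        show "(\<phi>2 has_real_derivative - \<alpha>2 (\<phi>2 x) + \<alpha>2 \<delta>bar) (at x)"
          using deriv_open[OF \<phi>2_ode1[OF k xI] subo] x by simp
        have "\<phi>2 x < \<delta>bar" using s(4)[of x] x b' by simp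
        moreover have "\<phi>2 x > 0" using pos[of x] x by simp
        ultimately have "\<alpha>2 (\<phi>2 x) < \<alpha>2 \<delta>bar"
          using strict_mono_onD[OF a2m] by simp
        then show "- \<alpha>2 (\<phi>2 x) + \<alpha>2 \<delta>bar \<ge> 0" by simp
      qed
      moreover have "\<phi>2 b' < \<delta>bar" using s(4)[of b'] b' by simp
      ultimately show False using s(3) by simp
    qed
  qed
  have P3: "\<forall>k\<in>Kset K. \<forall>\<tau>\<in>Ival2 K t \<tau>hat k. \<phi>2 \<tau> = \<delta> k \<tau>"
  proof (intro ballI)
    fix k b assume k: "k \<in> Kset K" and bI: "b \<in> Ival2 K t \<tau>hat k"
    let ?I = "Ival2 K t \<tau>hat k"
    define a where "a = t k + \<tau>hat"
    define e where "e x = \<phi>2 x - \<delta> k x" for x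
    have ab: "a \<le> b" using bI by (simp add: Ival2_def a_def)
    have aI: "a \<in> ?I" using bI
      unfolding Ival2_def a_def by (auto intro: order.strict_trans1[of "ereal (t k + \<tau>hat)" "ereal b"])
    have sub: "{a..b} \<subseteq> ?I"
    proof
      fix z assume "z \<in> {a..b}"
      then show "z \<in> ?I" using Ival2_conv[OF aI bI, of z] by simp
    qed
    obtain S1 where S1: "finite S1" "\<And>\<tau>. \<tau> \<in> ?I - S1 \<Longrightarrow>
       (\<phi>2 has_real_derivative
          (- \<alpha>2 (\<phi>2 \<tau>) + vector_derivative (\<delta> k) (at \<tau> within ?I) + \<alpha>2 (\<delta> k \<tau>)))
        (at \<tau> within ?I)"
      using \<phi>2_ode2[OF k] by blast
    have dcont: "continuous_on ?I (\<delta> k)"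
      using \<delta>_pwd[OF k] by (simp add: piecewise_differentiable_on_def)
    obtain S2 where S2: "finite S2" "\<And>x. x \<in> ?I - S2 \<Longrightarrow> \<delta> k differentiable (at x within ?I)"
      using \<delta>_pwd[OF k] unfolding piecewise_differentiable_on_def by blast
    have eder: "(e has_real_derivative (\<alpha>2 (\<delta> k x) - \<alpha>2 (\<phi>2 x))) (at x within ?I)"
      if "x \<in> ?I - (S1 \<union> S2)" for x
    proof -
      have "(\<delta> k has_vector_derivative vector_derivative (\<delta> k) (at x within ?I)) (at x within ?I)"
        using S2(2)[of x] that vector_derivative_works by blast
      then have d1: "(\<delta> k has_real_derivative vector_derivative (\<delta> k) (at x within ?I)) (at x within ?I)"
        by (simp add: has_real_derivative_iff_has_vector_derivative)
      show ?thesis unfolding e_def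
        using DERIV_diff[OF S1(2)[of x] d1] that by simp
    qed
    have econt: "continuous_on ?I e"
      unfolding e_def using dcont \<phi>2_cont2[OF k] by (intro continuous_intros)
    then have econtab: "continuous_on {a..b} e" using continuous_on_subset sub by blast
    have ea: "e a = 0" using init_th[OF k] aI sh_eq[OF k] by (simp add: e_def a_def)
    have sub2: "\<And>s b'. a \<le> s \<Longrightarrow> b' \<le> b \<Longrightarrow> {s<..<b'} \<subseteq> ?I" using sub by auto
    have mf: "\<And>s b' (f::real\<Rightarrow>real) f'. a \<le> s \<Longrightarrow> s \<le> b' \<Longrightarrow> b' \<le> b \<Longrightarrow>
       continuous_on {a..b} f \<Longrightarrow>
       (\<And>x. x \<in> {s<..<b'} - (S1 \<union> S2) \<Longrightarrow> (f has_real_derivative f' x) (at x within ?I)) \<Longrightarrow>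
       (\<And>x. x \<in> {s<..<b'} - (S1 \<union> S2) \<Longrightarrow> f' x \<ge> 0) \<Longrightarrow> f s \<le> f b'"
    proof -
      fix s b' and f f' :: "real \<Rightarrow> real"
      assume h: "a \<le> s" "s \<le> b'" "b' \<le> b" "continuous_on {a..b} f"
        "\<And>x. x \<in> {s<..<b'} - (S1 \<union> S2) \<Longrightarrow> (f has_real_derivative f' x) (at x within ?I)"
        "\<And>x. x \<in> {s<..<b'} - (S1 \<union> S2) \<Longrightarrow> f' x \<ge> 0"
      show "f s \<le> f b'"
      proof (rule mono_fin[where a=s and b=b' and f=f and S="S1 \<union> S2" and f'=f'])
        show "s \<le> b'" by (rule h(2))
        show "continuous_on {s..b'} f" using h(1-4) by (auto intro: continuous_on_subset)
        show "finite (S1 \<union> S2)" using S1 S2 by simp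
        fix x assume x: "x \<in> {s<..<b'} - (S1 \<union> S2)"
        show "(f has_real_derivative f' x) (at x)"
          using deriv_open[OF h(5)[OF x] sub2[OF h(1) h(3)]] x by simp
        show "f' x \<ge> 0" using h(6)[OF x] .
      qed
    qed
    show "\<phi>2 b = \<delta> k b"
    proof (rule ccontr)
      assume "\<phi>2 b \<noteq> \<delta> k b"
      then consider "e b > 0" | "e b < 0" by (force simp: e_def)
      then show False
      proof cases
        case 1
        have c2: "continuous_on {a..b} (\<lambda>x. - e x)" using econtab by (intro continuous_intros)
        obtain s where s: "a \<le> s" "s < b" "- e s = 0" "\<And>x. s < x \<Longrightarrow> x \<le> b \<Longrightarrow> - e x < 0"
          using last_cross[OF ab c2, of 0] ea 1 by auto
        have "- e s \<le> - e b"
        proof (rule mf[where s=s and b'=b and f="\<lambda>x. - e x" and f'="\<lambda>x. \<alpha>2 (\<phi>2 x) - \<alpha>2 (\<delta> k x)"])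
          show "a \<le> s" "s \<le> b" "b \<le> b" using s by auto
          show "continuous_on {a..b} (\<lambda>x. - e x)" by (rule c2)
          fix x assume x: "x \<in> {s<..<b} - (S1 \<union> S2)"
          then have xI: "x \<in> ?I" using sub2[OF s(1), of b] by auto
          show "((\<lambda>x. - e x) has_real_derivative \<alpha>2 (\<phi>2 x) - \<alpha>2 (\<delta> k x)) (at x within ?I)"
            using DERIV_minus[OF eder[of x]] xI x by simp
          have "\<delta> k x > 0" using \<delta>_pos[OF k xI] .
          moreover have "\<phi>2 x > \<delta> k x" using s(4)[of x] x by (simp add: e_def)
          ultimately have "\<alpha>2 (\<delta> k x) < \<alpha>2 (\<phi>2 x)"
            using strict_mono_onD[OF a2m] by simp
          then show "\<alpha>2 (\<phi>2 x) - \<alpha>2 (\<delta> k x) \<ge> 0" by simp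
        qed
        then show False using s(3) 1 by simp
      next
        case 2
        obtain s where s: "a \<le> s" "s < b" "e s = 0" "\<And>x. s < x \<Longrightarrow> x \<le> b \<Longrightarrow> e x < 0"
          using last_cross[OF ab econtab, of 0] ea 2 by auto
        have sI: "s \<in> ?I" using sub s(1,2) by (meson atLeastAtMost_iff less_le_not_le subsetD)
        have ps: "\<phi>2 s > 0" using s(3) \<delta>_pos[OF k sI] by (simp add: e_def)
        have cont: "continuous_on {a..b} \<phi>2" using \<phi>2_cont2[OF k] continuous_on_subset sub by blast
        have "continuous (at s within {a..b}) \<phi>2" using cont s(1,2)
          by (simp add: continuous_on_eq_continuous_within)
        then obtain d where d: "d > 0" "\<And>x. x \<in> {a..b} \<Longrightarrow> dist x s < d \<Longrightarrow> dist (\<phi>2 x) (\<phi>2 s) < \<phi>2 s"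
          using continuous_within_eps_delta ps by metis
        define b' where "b' = min b (s + d/2)"
        have b': "s < b'" "b' \<le> b" "b' \<le> s + d/2" using s d by (auto simp: b'_def)
        have pos: "\<phi>2 x > 0" if "s \<le> x" "x \<le> b'" for x
        proof -
          have "x \<in> {a..b}" using that s b' by simp
          moreover have "dist x s < d" using that b' d by (simp add: dist_real_def)
          ultimately have "dist (\<phi>2 x) (\<phi>2 s) < \<phi>2 s" by (rule d(2))
          then show ?thesis by (simp add: dist_real_def)
        qed
        have "e s \<le> e b'"
        proof (rule mf[where s=s and b'=b' and f=e and f'="\<lambda>x. \<alpha>2 (\<delta> k x) - \<alpha>2 (\<phi>2 x)"])
          show "a \<le> s" "s \<le> b'" "b' \<le> b" using s b' by auto
          show "continuous_on {a..b} e" by (rule econtab)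
          fix x assume x: "x \<in> {s<..<b'} - (S1 \<union> S2)"
          then have xI: "x \<in> ?I" using sub2[OF s(1) b'(2)] by auto
          show "(e has_real_derivative \<alpha>2 (\<delta> k x) - \<alpha>2 (\<phi>2 x)) (at x within ?I)"
            using eder[of x] xI x by simp
          have "\<phi>2 x > 0" using pos[of x] x by simp
          moreover have "\<phi>2 x < \<delta> k x" using s(4)[of x] x b' by (simp add: e_def)
          ultimately have "\<alpha>2 (\<phi>2 x) < \<alpha>2 (\<delta> k x)"
            using strict_mono_onD[OF a2m] by simp
          then show "\<alpha>2 (\<delta> k x) - \<alpha>2 (\<phi>2 x) \<ge> 0" by simp
        qed
        moreover have "e b' < 0" using s(4)[of b'] b' by simp
        ultimately show False using s(3) by simp
      qed
    qed
  qed
  have P1: "\<forall>k\<in>Kset K. \<forall>\<tau>\<in>Ival K t k. \<phi>1 \<tau> \<ge> 0 \<and> \<phi>2 \<tau> \<ge> 0"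
  proof (intro ballI)
    fix k b assume k: "k \<in> Kset K" and bI: "b \<in> Ival K t k"
    let ?V = "\<lambda>x. varphi c1 c2 \<sigma> p lam gradVc g \<gamma> (\<xi> x) (\<xi> (t k) - \<xi> x)"
    have pos: "- \<alpha>1 (\<phi>1 x) + k2 * \<phi>2 x - ?V x > 0" if "x \<in> Ival K t k" "\<phi>1 x = 0" for x
      using trigger[OF k that(1)] that(2) a10 by simp
    have split: "Ival K t k = Ival1 K t \<tau>hat k \<union> Ival2 K t \<tau>hat k"
      by (rule Ival_split[OF \<tau>hat_pos])
    consider "b \<in> Ival1 K t \<tau>hat k" | "b \<in> Ival2 K t \<tau>hat k" using bI split by blast
    then show "\<phi>1 b \<ge> 0 \<and> \<phi>2 b \<ge> 0"
    proof cases
      case 1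
      have "\<phi>2 b \<ge> 0" using P2 k 1 \<delta>bar_pos by force
      moreover have "\<phi>1 b \<ge> 0"
      proof (rule nonneg_keep[where f=\<phi>1 and b=b and I="Ival1 K t \<tau>hat k" and a="t k"
            and f'="\<lambda>x. - \<alpha>1 (\<phi>1 x) + k2 * \<phi>2 x - ?V x"])
        show "t k \<in> Ival1 K t \<tau>hat k" using 1 \<tau>hat_pos
          unfolding Ival1_def by (auto intro: order.strict_trans1[of "ereal (t k)" "ereal b"])
        show "\<phi>1 (t k) \<ge> 0" using init_t[OF k] init_nonneg[OF k] by simp
        show "\<And>x y z. x \<in> Ival1 K t \<tau>hat k \<Longrightarrow> y \<in> Ival1 K t \<tau>hat k \<Longrightarrow> x \<le> z \<Longrightarrow> z \<le> y \<Longrightarrow> z \<in> Ival1 K t \<tau>hat k"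
          by (rule Ival1_conv)
        show "\<And>x. x \<in> Ival1 K t \<tau>hat k \<Longrightarrow> (\<phi>1 has_real_derivative - \<alpha>1 (\<phi>1 x) + k2 * \<phi>2 x - ?V x) (at x within Ival1 K t \<tau>hat k)"
          using \<phi>1_ode1[OF k] by blast
        show "\<And>x. x \<in> Ival1 K t \<tau>hat k \<Longrightarrow> \<phi>1 x = 0 \<Longrightarrow> - \<alpha>1 (\<phi>1 x) + k2 * \<phi>2 x - ?V x > 0"
          using pos split by blast
        show "b \<in> Ival1 K t \<tau>hat k" by (rule 1)
        show "t k \<le> b" using 1 by (simp add: Ival1_def)
      qed
      ultimately show ?thesis by simp
    next
      case 2
      have "\<phi>2 b \<ge> 0" using P3 k 2 \<delta>_pos[OF k 2] by force
      moreover have "\<phi>1 b \<ge> 0"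
      proof (rule nonneg_keep[where f=\<phi>1 and b=b and I="Ival2 K t \<tau>hat k" and a="t k + \<tau>hat"
            and f'="\<lambda>x. - \<alpha>1 (\<phi>1 x) + k2 * \<phi>2 x - ?V x"])
        show aI: "t k + \<tau>hat \<in> Ival2 K t \<tau>hat k" using 2
          unfolding Ival2_def by (auto intro: order.strict_trans1[of "ereal (t k + \<tau>hat)" "ereal b"])
        show "\<phi>1 (t k + \<tau>hat) \<ge> 0" using init_th[OF k aI] init_nonneg[OF k] by simp
        show "\<And>x y z. x \<in> Ival2 K t \<tau>hat k \<Longrightarrow> y \<in> Ival2 K t \<tau>hat k \<Longrightarrow> x \<le> z \<Longrightarrow> z \<le> y \<Longrightarrow> z \<in> Ival2 K t \<tau>hat k"
          by (rule Ival2_conv)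
        show "\<And>x. x \<in> Ival2 K t \<tau>hat k \<Longrightarrow> (\<phi>1 has_real_derivative - \<alpha>1 (\<phi>1 x) + k2 * \<phi>2 x - ?V x) (at x within Ival2 K t \<tau>hat k)"
          using \<phi>1_ode2[OF k] by blast
        show "\<And>x. x \<in> Ival2 K t \<tau>hat k \<Longrightarrow> \<phi>1 x = 0 \<Longrightarrow> - \<alpha>1 (\<phi>1 x) + k2 * \<phi>2 x - ?V x > 0"
          using pos split by blast
        show "b \<in> Ival2 K t \<tau>hat k" by (rule 2)
        show "t k + \<tau>hat \<le> b" using 2 by (simp add: Ival2_def)
      qed
      ultimately show ?thesis by simp
    qed
  qed
  show ?thesis using P1 P2 P3 by blast
qed

end
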